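(* Let $\mathfrak g$ be a Kac–Moody algebra with Dynkin diagram $\Gamma$ and Weyl group $W$, and let $(u,v)\in W\times W$. Then the Berenstein–Fomin–Zelevinsky quiver $Q^{u,v}$, drawn on the cylinder $\Gamma\times\mathbb{R}$ in the standard way, is planar in each sheet: within any sheet, no two arrows of $Q^{u,v}$ cross.
   Context: Let $\Gamma$ have vertex set $[1,r]$ and generalized Cartan matrix $(a_{ij})$; vertices $i\neq j$ are adjacent in $\Gamma$ iff $a_{ij}<0$. $W$ is generated by the simple reflections $s_1,\dots,s_r$. BFZ quiver. Write a reduced word for $u$ using the negative indices $-1,\dots,-r$ (the letter $-j$ standing for $s_j$) and a reduced word for $v$ using positive indices, and let $\mathbf i=(i_1,\dots,i_m)$, $m=\ell(u)+\ell(v)$, be any shuffle of the two. Put $i_{-j}=-j$ for $j\in[1,r]$. For $k\in[-r,-1]\cup[1,m]$ let $k^+$ be the smallest $l>k$ with $|i_l|=|i_k|$, or $k^+=m+1$ if there is none. Let $\varepsilon(i)\in\{\pm1\}$ be the sign of $i$. An index $k$ is $\mathbf i$-exchangeable if both $k,k^+\in[-r,-1]\cup[1,m]$. The quiver $Q^{u,v}$ has vertex set $[-r,-1]\cup[1,m]$; for $k<l$ there is an arrow between $k$ and $l$ iff at least one of $k,l$ is exchangeable and one of: (horizontal) $l=k^+$, directed $k\to l$ iff $\varepsilon(i_l)=+1$; (inclined) $|i_k|,|i_l|$ adjacent in $\Gamma$ and either $l<k^+<l^+$ with $\varepsilon(i_l)=\varepsilon(i_{k^+})$, or $l<l^+<k^+$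 with $\varepsilon(i_l)=-\varepsilon(i_{l^+})$; an inclined arrow is directed $k\to l$ iff $\varepsilon(i_l)=-1$. Cylinder. The cylinder over $\Gamma$ (as a topological graph) is $\Gamma\times\mathbb{R}$; $\{x\}\times\mathbb{R}$ for a vertex $x$ is a string. An endpoint of $\Gamma$ is a vertex with one incident edge, a branching point one with more than two; a branch $\Gamma_{m,n}$ is a path between two vertices each of which is an endpoint or branching point, and $\Gamma_{m,n}\times\mathbb{R}$ is the sheet over it. The standard drawing places vertex $k$ of $Q^{u,v}$ at the point $(|i_k|,k)$ on the string over $|i_k|$ and draws arrows as straight segments (horizontal arrows on strings, inclined arrows between adjacent strings). *)

theory Defs
  imports Complex_Main
begin

text \<open>Vertices of \<Gamma> are 1..r; the GCM is A i j for i j in 1..r.\<close>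

definition is_GCM :: "nat \<Rightarrow> (nat \<Rightarrow> nat \<Rightarrow> int) \<Rightarrow> bool" where
  "is_GCM r A \<longleftrightarrow>
     (\<forall>i\<in>{1..r}. A i i = 2) \<and>
     (\<forall>i\<in>{1..r}. \<forall>j\<in>{1..r}. i \<noteq> j \<longrightarrow> A i j \<le> 0) \<and>
     (\<forall>i\<in>{1..r}. \<forall>j\<in>{1..r}. A i j = 0 \<longleftrightarrow> A j i = 0)"

definition dyn_adj :: "nat \<Rightarrow> (nat \<Rightarrow> nat \<Rightarrow> int) \<Rightarrow> nat \<Rightarrow> nat \<Rightarrow> bool" where
  "dyn_adj r A x y \<longleftrightarrow> x \<in> {1..r} \<and> y \<in> {1..r} \<and> x \<noteq> y \<and> A x y < 0"

definition dyn_deg :: "nat \<Rightarrow> (nat \<Rightarrow> nat \<Rightarrow> int) \<Rightarrow> nat \<Rightarrow> nat" where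
  "dyn_deg r A x = card {y. dyn_adj r A x y}"

text \<open>Simple reflection s_i acting on the root lattice (coefficients w.r.t. simple roots):
  s_i(alpha_j) = alpha_j - a_ij alpha_i.  The Weyl group W is the group generated by these.\<close>
definition simple_refl :: "nat \<Rightarrow> (nat \<Rightarrow> nat \<Rightarrow> int) \<Rightarrow> nat \<Rightarrow> (nat \<Rightarrow> int) \<Rightarrow> (nat \<Rightarrow> int)" where
  "simple_refl r A i c = c(i := c i - (\<Sum>j\<in>{1..r}. A i j * c j))"

definition word_action :: "nat \<Rightarrow> (nat \<Rightarrow> nat \<Rightarrow> int) \<Rightarrow> nat list \<Rightarrow> (nat \<Rightarrow> int) \<Rightarrow> (nat \<Rightarrow> int)" where
  "word_action r A w = foldr (\<lambda>i f. simple_refl r A i \<circ> f) w id"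

definition is_word :: "nat \<Rightarrow> nat list \<Rightarrow> bool" where
  "is_word r w \<longleftrightarrow> set w \<subseteq> {1..r}"

definition reduced_word :: "nat \<Rightarrow> (nat \<Rightarrow> nat \<Rightarrow> int) \<Rightarrow> nat list \<Rightarrow> bool" where
  "reduced_word r A w \<longleftrightarrow> is_word r w \<and>
     (\<forall>w'. is_word r w' \<and> word_action r A w' = word_action r A w \<longrightarrow> length w \<le> length w')"

definition qv_set :: "nat \<Rightarrow> nat \<Rightarrow> int set" where
  "qv_set r m = {- int r .. -1} \<union> {1 .. int m}"

text \<open>i_k, with the convention i_{-j} = -j.\<close>
definition letter :: "int list \<Rightarrow> int \<Rightarrow> int" where
  "letter w k = (if k < 0 then k else w ! (nat k - 1))"

definition nxt :: "nat \<Rightarrow> int list \<Rightarrow> int \<Rightarrow> int" where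
  "nxt r w k = (if \<exists>l. l \<in> qv_set r (length w) \<and> k < l \<and> \<bar>letter w l\<bar> = \<bar>letter w k\<bar>
                then (LEAST l. l \<in> qv_set r (length w) \<and> k < l \<and> \<bar>letter w l\<bar> = \<bar>letter w k\<bar>)
                else int (length w) + 1)"

definition exch :: "nat \<Rightarrow> int list \<Rightarrow> int \<Rightarrow> bool" where
  "exch r w k \<longleftrightarrow> k \<in> qv_set r (length w) \<and> nxt r w k \<in> qv_set r (length w)"

definition horiz :: "nat \<Rightarrow> int list \<Rightarrow> int \<Rightarrow> int \<Rightarrow> bool" where
  "horiz r w k l \<longleftrightarrow> l = nxt r w k"

definition incl :: "nat \<Rightarrow> (nat \<Rightarrow> nat \<Rightarrow> int) \<Rightarrow> int list \<Rightarrow> int \<Rightarrow> int \<Rightarrow> bool" where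
  "incl r A w k l \<longleftrightarrow>
     dyn_adj r A (nat \<bar>letter w k\<bar>) (nat \<bar>letter w l\<bar>) \<and>
     ((l < nxt r w k \<and> nxt r w k < nxt r w l \<and> sgn (letter w l) = sgn (letter w (nxt r w k))) \<or>
      (l < nxt r w l \<and> nxt r w l < nxt r w k \<and> sgn (letter w l) = - sgn (letter w (nxt r w l))))"

text \<open>For k < l: there is an arrow between k and l.\<close>
definition bfz_conn :: "nat \<Rightarrow> (nat \<Rightarrow> nat \<Rightarrow> int) \<Rightarrow> int list \<Rightarrow> int \<Rightarrow> int \<Rightarrow> bool" where
  "bfz_conn r A w k l \<longleftrightarrow> (exch r w k \<or> exch r w l) \<and> (horiz r w k l \<or> incl r A w k l)"

text \<open>For k < l connected: the arrow is directed k -> l.\<close>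
definition bfz_fwd :: "nat \<Rightarrow> (nat \<Rightarrow> nat \<Rightarrow> int) \<Rightarrow> int list \<Rightarrow> int \<Rightarrow> int \<Rightarrow> bool" where
  "bfz_fwd r A w k l \<longleftrightarrow>
     (horiz r w k l \<and> sgn (letter w l) = 1) \<or> (incl r A w k l \<and> sgn (letter w l) = -1)"

definition bfz_arrow :: "nat \<Rightarrow> (nat \<Rightarrow> nat \<Rightarrow> int) \<Rightarrow> int list \<Rightarrow> int \<Rightarrow> int \<Rightarrow> bool" where
  "bfz_arrow r A w p q \<longleftrightarrow> p \<in> qv_set r (length w) \<and> q \<in> qv_set r (length w) \<and>
     ((p < q \<and> bfz_conn r A w p q \<and> bfz_fwd r A w p q) \<or>
      (q < p \<and> bfz_conn r A w q p \<and> \<not> bfz_fwd r A w q p))"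

text \<open>Points of the cylinder: Str x t is the point (x,t) on the string over vertex x;
  Edg a b s t (a < b, 0 < s < 1) is the point at height t lying over the interior point
  of the edge {a,b} at fraction s of the way from a to b.\<close>
datatype cyl_pt = Str nat real | Edg nat nat real real

definition seg :: "nat \<Rightarrow> real \<Rightarrow> nat \<Rightarrow> real \<Rightarrow> cyl_pt set" where
  "seg x h1 y h2 =
    (if x = y then {Str x t | t. min h1 h2 \<le> t \<and> t \<le> max h1 h2}
     else if x < y then {Str x h1, Str y h2} \<union> {Edg x y s (h1 + s * (h2 - h1)) | s. 0 < s \<and> s < 1}
     else {Str x h1, Str y h2} \<union> {Edg y x s (h2 + s * (h1 - h2)) | s. 0 < s \<and> s < 1})"

definition vpos :: "int list \<Rightarrow> int \<Rightarrow> cyl_pt" where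
  "vpos w k = Str (nat \<bar>letter w k\<bar>) (of_int k)"

definition arrow_seg :: "int list \<Rightarrow> int \<Rightarrow> int \<Rightarrow> cyl_pt set" where
  "arrow_seg w p q = seg (nat \<bar>letter w p\<bar>) (of_int p) (nat \<bar>letter w q\<bar>) (of_int q)"

text \<open>A branch: a path P = [x0,...,xn] in \<Gamma> whose end vertices are endpoints or branching
  points and whose interior vertices are neither (degree 2). Closed branches (x0 = xn) allowed.\<close>
definition is_branch :: "nat \<Rightarrow> (nat \<Rightarrow> nat \<Rightarrow> int) \<Rightarrow> nat list \<Rightarrow> bool" where
  "is_branch r A P \<longleftrightarrow> 2 \<le> length P \<and> distinct (tl P) \<and> distinct (butlast P) \<and>
     (\<forall>j. Suc j < length P \<longrightarrow> dyn_adj r A (P ! j) (P ! Suc j)) \<and>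
     (dyn_deg r A (hd P) = 1 \<or> dyn_deg r A (hd P) > 2) \<and>
     (dyn_deg r A (last P) = 1 \<or> dyn_deg r A (last P) > 2) \<and>
     (\<forall>j. 0 < j \<and> j + 1 < length P \<longrightarrow> dyn_deg r A (P ! j) = 2)"

definition sheet_pts :: "nat list \<Rightarrow> cyl_pt set" where
  "sheet_pts P = {Str x t | x t. x \<in> set P} \<union>
     {Edg a b s t | a b s t. \<exists>j. Suc j < length P \<and> {a, b} = {P ! j, P ! Suc j} \<and> a < b \<and> 0 < s \<and> s < 1}"

end

theory Submission
  imports Defs
begin

definition okA :: "(int \<Rightarrow> nat) \<Rightarrow> int set \<Rightarrow> int \<Rightarrow> int \<Rightarrow> bool" where
  "okA S Q k l \<longleftrightarrow> k < l \<and> k \<in> Q \<and> l \<in> Q \<and> (\<forall>e\<in>Q. S e = S k \<and> k < e \<longrightarrow> l \<le> e)"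

lemma seg_sym: "seg x h1 y h2 = seg y h2 x h1"
  unfolding seg_def by (auto simp: min.commute max.commute)

lemma seg_Str:
  assumes "Str x t \<in> seg a h1 b h2" "h1 \<le> h2"
  shows "(a = b \<and> x = a \<and> h1 \<le> t \<and> t \<le> h2) \<or> (a \<noteq> b \<and> ((x = a \<and> t = h1) \<or> (x = b \<and> t = h2)))"
  using assms unfolding seg_def by (auto split: if_splits)

lemma seg_Edg:
  assumes "Edg a b s t \<in> seg x (of_int k) y (of_int l)"
  shows "\<exists>\<alpha> \<beta>. {\<alpha>, \<beta>} = {k, l} \<and> ((\<alpha> = k \<and> a = x \<and> b = y) \<or> (\<alpha> = l \<and> a = y \<and> b = x)) \<and> a < b \<and> 0 < s \<and> s < 1
     \<and> t = of_int \<alpha> + s * (of_int \<beta> - of_int \<alpha>)"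
  using assms unfolding seg_def by (auto split: if_splits)

lemma noncross:
  assumes "a \<noteq> b" "S \<alpha>1 = a" "S \<alpha>2 = a" "S \<beta>1 = b" "S \<beta>2 = b"
    and "okA S Q (min \<alpha>1 \<beta>1) (max \<alpha>1 \<beta>1)" "okA S Q (min \<alpha>2 \<beta>2) (max \<alpha>2 \<beta>2)"
  shows "\<not> (\<alpha>1 < \<alpha>2 \<and> \<beta>2 < \<beta>1)"
proof
  assume c: "\<alpha>1 < \<alpha>2 \<and> \<beta>2 < \<beta>1"
  have ne1: "\<alpha>1 \<noteq> \<beta>1" and ne2: "\<alpha>2 \<noteq> \<beta>2" using assms by auto
  have Q: "\<alpha>1 \<in> Q" "\<beta>1 \<in> Q" "\<alpha>2 \<in> Q" "\<beta>2 \<in> Q" using assms(6,7) unfolding okA_def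
    by (auto simp: min_def max_def split: if_splits)
  show False
  proof (cases "\<alpha>1 < \<beta>1")
    case True
    then have g1: "\<forall>e\<in>Q. S e = a \<and> \<alpha>1 < e \<longrightarrow> \<beta>1 \<le> e" using assms(6,2) unfolding okA_def by auto
    then have "\<beta>1 \<le> \<alpha>2" using Q c assms by auto
    show False
    proof (cases "\<alpha>2 < \<beta>2")
      case True then show ?thesis using c \<open>\<beta>1 \<le> \<alpha>2\<close> by auto
    next
      case False
      then have "\<beta>2 < \<alpha>2" using ne2 by auto
      then have "\<forall>e\<in>Q. S e = b \<and> \<beta>2 < e \<longrightarrow> \<alpha>2 \<le> e" using assms(7,5) unfolding okA_def by auto
      then have "\<alpha>2 \<le> \<beta>1" using Q c assms by auto
      then show ?thesis using \<open>\<beta>1 \<le> \<alpha>2\<close> ne1 ne2 assms by auto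
    qed
  next
    case False
    then have "\<beta>1 < \<alpha>1" using ne1 by auto
    show False
    proof (cases "\<alpha>2 < \<beta>2")
      case True then show ?thesis using c \<open>\<beta>1 < \<alpha>1\<close> by auto
    next
      case False
      then have "\<beta>2 < \<alpha>2" using ne2 by auto
      then have "\<forall>e\<in>Q. S e = b \<and> \<beta>2 < e \<longrightarrow> \<alpha>2 \<le> e" using assms(7,5) unfolding okA_def by auto
      then have "\<alpha>2 \<le> \<beta>1" using Q c assms by auto
      then show ?thesis using c \<open>\<beta>1 < \<alpha>1\<close> by auto
    qed
  qed
qed

lemma arith0:
  fixes d1 d2 s :: real
  assumes "0 < s" "s < 1" "(1 - s) * d1 + s * d2 = 0"
    "\<not> (d1 < 0 \<and> d2 > 0)" "\<not> (d1 > 0 \<and> d2 < 0)"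
  shows "d1 = 0 \<and> d2 = 0"
proof -
  have "d1 \<ge> 0 \<and> d2 \<ge> 0 \<or> d1 \<le> 0 \<and> d2 \<le> 0" using assms(4,5) by linarith
  then show ?thesis
  proof
    assume h: "d1 \<ge> 0 \<and> d2 \<ge> 0"
    have "(1 - s) * d1 \<ge> 0" "s * d2 \<ge> 0" using h assms by auto
    then have "(1 - s) * d1 = 0" "s * d2 = 0" using assms(3) by linarith+
    then show ?thesis using assms by auto
  next
    assume h: "d1 \<le> 0 \<and> d2 \<le> 0"
    have "(1 - s) * d1 \<le> 0" "s * d2 \<le> 0" using h assms by (auto simp: mult_nonneg_nonpos)
    then have "(1 - s) * d1 = 0" "s * d2 = 0" using assms(3) by linarith+
    then show ?thesis using assms by auto
  qed
qed


lemma geo: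
  assumes ok1: "okA S Q k l" and ok2: "okA S Q k' l'" and ne: "{k, l} \<noteq> {k', l'}"
    and z1: "z \<in> seg (S k) (of_int k) (S l) (of_int l)"
    and z2: "z \<in> seg (S k') (of_int k') (S l') (of_int l')"
  shows "\<exists>e\<in>{k, l} \<inter> {k', l'}. z = Str (S e) (of_int e)"
proof (cases z)
  case (Str x t)
  have kl: "k < l" "k' < l'" using ok1 ok2 unfolding okA_def by auto
  have c1: "(S k = S l \<and> x = S k \<and> of_int k \<le> t \<and> t \<le> of_int l) \<or> (S k \<noteq> S l \<and> ((x = S k \<and> t = of_int k) \<or> (x = S l \<and> t = of_int l)))"
    using seg_Str[of x t "S k" "of_int k" "S l" "of_int l"] z1 kl Str by auto
  have c2: "(S k' = S l' \<and> x = S k' \<and> of_int k' \<le> t \<and> t \<le> of_int l') \<or> (S k' \<noteq> S l' \<and> ((x = S k' \<and> t = of_int k') \<or> (x = S l' \<and> t = of_int l')))"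
    using seg_Str[of x t "S k'" "of_int k'" "S l'" "of_int l'"] z2 kl Str by auto
  have g1: "\<And>e. e \<in> Q \<Longrightarrow> S e = S k \<Longrightarrow> k < e \<Longrightarrow> l \<le> e" and Q1: "k \<in> Q" "l \<in> Q"
    using ok1 unfolding okA_def by auto
  have g2: "\<And>e. e \<in> Q \<Longrightarrow> S e = S k' \<Longrightarrow> k' < e \<Longrightarrow> l' \<le> e" and Q2: "k' \<in> Q" "l' \<in> Q"
    using ok2 unfolding okA_def by auto
  show ?thesis
  proof (cases "S k = S l")
    case T1: True
    with c1 have h1: "x = S k" "of_int k \<le> t" "t \<le> of_int l" by auto
    show ?thesis
    proof (cases "S k' = S l'")
      case True
      with c2 have h2: "x = S k'" "of_int k' \<le> t" "t \<le> of_int l'" by auto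
      consider "k < k'" | "k = k'" | "k' < k" by linarith
      then show ?thesis
      proof cases
        case 1
        then have "l \<le> k'" using g1[of k'] Q2 h1 h2 by auto
        then have "t = of_int l" "t = of_int k'" using h1 h2 by (smt (verit) of_int_le_iff)+
        then have "l = k'" by simp
        then show ?thesis using Str h1 T1 \<open>t = of_int l\<close> by auto
      next
        case 2
        then have "l \<le> l'" "l' \<le> l" using g1[of l'] g2[of l] Q1 Q2 h1 h2 kl T1 True by auto
        then show ?thesis using ne 2 by auto
      next
        case 3
        then have "l' \<le> k" using g2[of k] Q1 h1 h2 by auto
        then have "t = of_int l'" "t = of_int k" using h1 h2 by (smt (verit) of_int_le_iff)+
        then have "l' = k" by simp
        then show ?thesis using Str h1 T1 \<open>t = of_int k\<close> by auto
      qed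
    next
      case False
      with c2 obtain e where e: "e \<in> {k', l'}" "x = S e" "t = of_int e" by auto
      have "e \<in> Q" using e Q2 by auto
      have "k < e \<Longrightarrow> l \<le> e" using g1[of e] \<open>e \<in> Q\<close> e(2) h1(1) by simp
      moreover have "k \<le> e" "e \<le> l" using h1 e by simp_all
      ultimately have "e = k \<or> e = l" by linarith
      then show ?thesis using e Str by auto
    qed
  next
    case F1: False
    with c1 obtain e where e: "e \<in> {k, l}" "x = S e" "t = of_int e" by auto
    show ?thesis
    proof (cases "S k' = S l'")
      case True
      with c2 have h2: "x = S k'" "of_int k' \<le> t" "t \<le> of_int l'" by auto
      have "e \<in> Q" using e Q1 by auto
      have "k' < e \<Longrightarrow> l' \<le> e" using g2[of e] \<open>e \<in> Q\<close> e(2) h2(1) by simp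
      moreover have "k' \<le> e" "e \<le> l'" using h2 e by simp_all
      ultimately have "e = k' \<or> e = l'" by linarith
      then show ?thesis using e Str by auto
    next
      case False
      with c2 obtain e' where e': "e' \<in> {k', l'}" "x = S e'" "t = of_int e'" by auto
      then have "e = e'" using e by simp
      then show ?thesis using e e' Str by auto
    qed
  qed
next
  case (Edg a b s t)
  obtain \<alpha>1 \<beta>1 where A1: "{\<alpha>1, \<beta>1} = {k, l}" "(\<alpha>1 = k \<and> a = S k \<and> b = S l) \<or> (\<alpha>1 = l \<and> a = S l \<and> b = S k)"
     "a < b" "0 < s" "s < 1" "t = of_int \<alpha>1 + s * (of_int \<beta>1 - of_int \<alpha>1)"
    using seg_Edg[of a b s t "S k" k "S l" l] z1 Edg by blast
  obtain \<alpha>2 \<beta>2 where A2: "{\<alpha>2, \<beta>2} = {k', l'}" "(\<alpha>2 = k' \<and> a = S k' \<and> b = S l') \<or> (\<alpha>2 = l' \<and> a = S l' \<and> b = S k')"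
     "t = of_int \<alpha>2 + s * (of_int \<beta>2 - of_int \<alpha>2)"
    using seg_Edg[of a b s t "S k'" k' "S l'" l'] z2 Edg by blast
  have kl: "k < l" "k' < l'" using ok1 ok2 unfolding okA_def by auto
  have s1: "S \<alpha>1 = a" "S \<beta>1 = b" "min \<alpha>1 \<beta>1 = k" "max \<alpha>1 \<beta>1 = l"
    using A1 kl by (auto simp: doubleton_eq_iff)
  have s2: "S \<alpha>2 = a" "S \<beta>2 = b" "min \<alpha>2 \<beta>2 = k'" "max \<alpha>2 \<beta>2 = l'"
    using A2 kl by (auto simp: doubleton_eq_iff)
  have n1: "\<not> (\<alpha>1 < \<alpha>2 \<and> \<beta>2 < \<beta>1)"
    using noncross[of a b S \<alpha>1 \<alpha>2 \<beta>1 \<beta>2 Q] s1 s2 ok1 ok2 A1(3) by auto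
  have n2: "\<not> (\<alpha>2 < \<alpha>1 \<and> \<beta>1 < \<beta>2)"
    using noncross[of a b S \<alpha>2 \<alpha>1 \<beta>2 \<beta>1 Q] s1 s2 ok1 ok2 A1(3) by auto
  have eq: "(1 - s) * (of_int \<alpha>1 - of_int \<alpha>2) + s * (of_int \<beta>1 - of_int \<beta>2) = (0::real)"
    using A1(6) A2(3) by (simp add: algebra_simps)
  have "(of_int \<alpha>1 - of_int \<alpha>2::real) = 0 \<and> (of_int \<beta>1 - of_int \<beta>2::real) = 0"
    by (rule arith0[OF A1(4) A1(5) eq]) (use n1 n2 in auto)
  then have "\<alpha>1 = \<alpha>2" "\<beta>1 = \<beta>2" by auto
  then show ?thesis using A1(1) A2(1) ne by auto
qed


lemma nxt_min:
  assumes "k < e" "e \<in> qv_set r (length w)" "\<bar>letter w e\<bar> = \<bar>letter w k\<bar>"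
  shows "nxt r w k \<le> e"
proof -
  define P where "P = (\<lambda>l. l \<in> qv_set r (length w) \<and> k < l \<and> \<bar>letter w l\<bar> = \<bar>letter w k\<bar>)"
  have Pe: "P e" using assms unfolding P_def by auto
  have fin: "finite {l. P l}" unfolding P_def qv_set_def by (rule finite_subset[of _ "{- int r .. -1} \<union> {1 .. int (length w)}"]) auto
  define M where "M = Min {l. P l}"
  have PM: "P M" unfolding M_def using Min_in[OF fin] Pe by auto
  have Mle: "\<And>y. P y \<Longrightarrow> M \<le> y" unfolding M_def using Min_le[OF fin] by auto
  have L: "(LEAST l. P l) = M" by (rule Least_equality[of P M, OF PM Mle])
  have "nxt r w k = (LEAST l. P l)" unfolding nxt_def P_def[symmetric] using Pe by auto
  then show ?thesis using L Mle Pe by simp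
qed

lemma conn_ok:
  assumes "k < l" "k \<in> qv_set r (length w)" "l \<in> qv_set r (length w)" "bfz_conn r A w k l"
  shows "okA (\<lambda>x. nat \<bar>letter w x\<bar>) (qv_set r (length w)) k l"
proof -
  have lt: "l \<le> nxt r w k" using assms(4) unfolding bfz_conn_def horiz_def incl_def by auto
  show ?thesis unfolding okA_def
  proof (intro conjI ballI impI)
    fix e assume e: "e \<in> qv_set r (length w)" "nat \<bar>letter w e\<bar> = nat \<bar>letter w k\<bar> \<and> k < e"
    then have "\<bar>letter w e\<bar> = \<bar>letter w k\<bar>" by (metis abs_ge_zero eq_nat_nat_iff)
    then have "nxt r w k \<le> e" using nxt_min e by blast
    then show "l \<le> e" using lt by simp
  qed (use assms in auto)
qed

theorem mainTheorem2:
  fixes r :: nat and A :: "nat \<Rightarrow> nat \<Rightarrow> int" and su sv :: "nat list"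
    and w :: "int list" and P :: "nat list" and p q p' q' :: int
  assumes "is_GCM r A"
    and "reduced_word r A su" and "reduced_word r A sv"
    and "w \<in> shuffles (map (\<lambda>j. - int j) su) (map int sv)"
    and "is_branch r A P"
    and "bfz_arrow r A w p q" and "bfz_arrow r A w p' q'" and "{p, q} \<noteq> {p', q'}"
    and "arrow_seg w p q \<subseteq> sheet_pts P" and "arrow_seg w p' q' \<subseteq> sheet_pts P"
  shows "arrow_seg w p q \<inter> arrow_seg w p' q' \<subseteq> vpos w ` ({p, q} \<inter> {p', q'})"
proof -
  define S where "S = (\<lambda>x. nat \<bar>letter w x\<bar>)"
  define Q where "Q = qv_set r (length w)"
  have ex: "\<exists>k l. {p, q} = {k, l} \<and> okA S Q k l \<and> arrow_seg w p q = seg (S k) (of_int k) (S l) (of_int l)"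
    if "bfz_arrow r A w p q" for p q
  proof -
    have pq: "p \<in> Q" "q \<in> Q" and c: "(p < q \<and> bfz_conn r A w p q) \<or> (q < p \<and> bfz_conn r A w q p)"
      using that unfolding bfz_arrow_def Q_def by auto
    from c show ?thesis
    proof
      assume h: "p < q \<and> bfz_conn r A w p q"
      show ?thesis using conn_ok[of p q r w A] h pq unfolding S_def Q_def arrow_seg_def by blast
    next
      assume h: "q < p \<and> bfz_conn r A w q p"
      have "okA S Q q p" using conn_ok[of q p r w A] h pq unfolding S_def Q_def by blast
      moreover have "arrow_seg w p q = seg (S q) (of_int q) (S p) (of_int p)"
        unfolding arrow_seg_def S_def using seg_sym by metis
      ultimately show ?thesis by blast
    qed
  qed
  obtain k l where 1: "{p, q} = {k, l}" "okA S Q k l" "arrow_seg w p q = seg (S k) (of_int k) (S l) (of_int l)"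
    using ex[OF assms(6)] by blast
  obtain k' l' where 2: "{p', q'} = {k', l'}" "okA S Q k' l'" "arrow_seg w p' q' = seg (S k') (of_int k') (S l') (of_int l')"
    using ex[OF assms(7)] by blast
  show ?thesis
  proof
    fix z assume "z \<in> arrow_seg w p q \<inter> arrow_seg w p' q'"
    then obtain e where "e \<in> {k, l} \<inter> {k', l'}" "z = Str (S e) (of_int e)"
      using geo[OF 1(2) 2(2)] 1 2 assms(8) by auto
    then show "z \<in> vpos w ` ({p, q} \<inter> {p', q'})"
      unfolding vpos_def S_def using 1(1) 2(1) by auto
  qed
qed

end
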